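(* Every ternary cubic form $F\in\mathbb{C}[x_0,x_1,x_2]_3$ has an apolar star configuration $\mathbb{X}(4)$.
   Context: Let $S=\mathbb{C}[x_0,x_1,x_2]$ and $T=\mathbb{C}[y_0,y_1,y_2]$, where $T$ acts on $S$ by differentiation, $y_j=\partial/\partial x_j$. For a form $F\in S$, $F^\perp=\{\partial\in T:\partial F=0\}$. A finite set of points $\mathbb{X}\subset\mathbb{P}^2=\mathbb{P}(S_1)$ with defining ideal $I(\mathbb{X})\subseteq T$ is apolar to $F$ if $I(\mathbb{X})\subseteq F^\perp$. A star configuration $\mathbb{X}(4)\subset\mathbb{P}^2$: take $4$ linear forms $l_1,\dots,l_4\in T_1$ such that any $3$ of them are linearly independent; $\mathbb{X}(4)$ is the set of $6$ pairwise intersection points of the lines $\{l_i=0\}$, with ideal $\bigcap_{1\le i<j\le 4}(l_i,l_j)$. *)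

theory Defs
  imports Complex_Main
begin

text \<open>Polynomials in three variables with complex coefficients are represented by
  their coefficient functions on exponent triples (a0,a1,a2), i.e. the coefficient of
  the monomial  z0^a0 z1^a1 z2^a2 , with finite support.  The same representation is
  used for S = C[x0,x1,x2] and for T = C[y0,y1,y2].\<close>

type_synonym expo = "nat \<times> nat \<times> nat"
type_synonym cpoly3 = "expo \<Rightarrow> complex"
type_synonym cvec3 = "complex \<times> complex \<times> complex"

definition deg3 :: "expo \<Rightarrow> nat" where
  "deg3 a = fst a + fst (snd a) + snd (snd a)"

definition supp3 :: "cpoly3 \<Rightarrow> expo set" where
  "supp3 p = {a. p a \<noteq> 0}"

definition is_poly3 :: "cpoly3 \<Rightarrow> bool" where
  "is_poly3 p \<longleftrightarrow> finite (supp3 p)"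

definition is_form3 :: "nat \<Rightarrow> cpoly3 \<Rightarrow> bool" where
  "is_form3 d p \<longleftrightarrow> is_poly3 p \<and> (\<forall>a. p a \<noteq> 0 \<longrightarrow> deg3 a = d)"

definition eadd :: "expo \<Rightarrow> expo \<Rightarrow> expo" where
  "eadd a b = (fst a + fst b, fst (snd a) + fst (snd b), snd (snd a) + snd (snd b))"

definition mon_eval :: "expo \<Rightarrow> cvec3 \<Rightarrow> complex" where
  "mon_eval a v = fst v ^ fst a * fst (snd v) ^ fst (snd a) * snd (snd v) ^ snd (snd a)"

definition eval3 :: "cpoly3 \<Rightarrow> cvec3 \<Rightarrow> complex" where
  "eval3 p v = (\<Sum>a\<in>supp3 p. p a * mon_eval a v)"

text \<open>Differentiation factor:  (d/dx)^b x^(b+c) = ((b+c)!/c!) x^c  (componentwise).\<close>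
definition dfac :: "expo \<Rightarrow> expo \<Rightarrow> complex" where
  "dfac b c =
     of_nat (fact (fst b + fst c)) / of_nat (fact (fst c)) *
     (of_nat (fact (fst (snd b) + fst (snd c))) / of_nat (fact (fst (snd c)))) *
     (of_nat (fact (snd (snd b) + snd (snd c))) / of_nat (fact (snd (snd c))))"

text \<open>Action of D in T on F in S by differentiation, y_j = d/dx_j.
  Coefficient of x^c in D F.\<close>
definition apolar_act :: "cpoly3 \<Rightarrow> cpoly3 \<Rightarrow> cpoly3" where
  "apolar_act D F = (\<lambda>c. \<Sum>b\<in>supp3 D. D b * F (eadd b c) * dfac b c)"

definition perp :: "cpoly3 \<Rightarrow> cpoly3 set" where
  "perp F = {D. is_poly3 D \<and> apolar_act D F = (\<lambda>_. 0)}"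

text \<open>The (homogeneous) defining ideal of a set of points of P^2, each point given by
  a nonzero representative vector: all polynomials vanishing on the affine cone over
  the points (equivalently, whose homogeneous components all vanish at the points).\<close>
definition ideal_of_points :: "cvec3 set \<Rightarrow> cpoly3 set" where
  "ideal_of_points X = {D. is_poly3 D \<and> (\<forall>v\<in>X. \<forall>t::complex. eval3 D (t * fst v, t * fst (snd v), t * snd (snd v)) = 0)}"

definition lin_eval :: "cvec3 \<Rightarrow> cvec3 \<Rightarrow> complex" where
  "lin_eval l v = fst l * fst v + fst (snd l) * fst (snd v) + snd (snd l) * snd (snd v)"

definition lin_indep3 :: "cvec3 \<Rightarrow> cvec3 \<Rightarrow> cvec3 \<Rightarrow> bool" where
  "lin_indep3 u v w \<longleftrightarrow>
     (\<forall>a b c :: complex. (a * fst u + b * fst v + c * fst w = 0 \<and>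
        a * fst (snd u) + b * fst (snd v) + c * fst (snd w) = 0 \<and>
        a * snd (snd u) + b * snd (snd v) + c * snd (snd w) = 0) \<longrightarrow> a = 0 \<and> b = 0 \<and> c = 0)"

definition star_forms4 :: "(nat \<Rightarrow> cvec3) \<Rightarrow> bool" where
  "star_forms4 l \<longleftrightarrow> (\<forall>i j k. i < 4 \<and> j < 4 \<and> k < 4 \<and> i \<noteq> j \<and> i \<noteq> k \<and> j \<noteq> k
        \<longrightarrow> lin_indep3 (l i) (l j) (l k))"

definition star_points4 :: "(nat \<Rightarrow> cvec3) \<Rightarrow> cvec3 set" where
  "star_points4 l = {v. v \<noteq> (0, 0, 0) \<and> (\<exists>i j. i < j \<and> j < 4 \<and> lin_eval (l i) v = 0 \<and> lin_eval (l j) v = 0)}"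

end

theory Submission
  imports Defs "HOL-Computational_Algebra.Fundamental_Theorem_Algebra"
begin

lemma cubic_root:
  fixes c0 c1 c2 c3 :: complex
  assumes "c3 \<noteq> 0"
  shows "\<exists>s. c0 + c1 * s + c2 * s^2 + c3 * s^3 = 0"
proof -
  let ?p = "[:c0, c1, c2, c3:]"
  have "degree ?p = 3" using assms by simp
  then have "\<not> constant (poly ?p)" by (subst constant_degree) simp
  then obtain z where "poly ?p z = 0" using fundamental_theorem_of_algebra by blast
  then show ?thesis by (auto simp: algebra_simps power2_eq_square power3_eq_cube)
qed

definition efact :: "expo \<Rightarrow> complex" where
  "efact e = of_nat (fact (fst e)) * of_nat (fact (fst (snd e))) * of_nat (fact (snd (snd e)))"

definition cube :: "cvec3 \<Rightarrow> cpoly3" where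
  "cube p = (\<lambda>e. if deg3 e = 3 then 6 / efact e * mon_eval e p else 0)"

lemma efact_nz: "efact e \<noteq> 0"
  by (simp add: efact_def)

lemma mon_eval_eadd: "mon_eval (eadd b c) p = mon_eval b p * mon_eval c p"
  by (simp add: mon_eval_def eadd_def power_add)

lemma mon_eval_scale: "mon_eval b (t * fst p, t * fst (snd p), t * snd (snd p)) = t ^ deg3 b * mon_eval b p"
  by (simp add: mon_eval_def deg3_def power_add power_mult_distrib)

lemma deg3_eadd: "deg3 (eadd b c) = deg3 b + deg3 c"
  by (simp add: deg3_def eadd_def)

lemma dfac_eq: "dfac b c = efact (eadd b c) / efact c"
  by (simp add: dfac_def efact_def eadd_def)

lemma cube_dfac:
  "cube p (eadd b c) * dfac b c = (if deg3 b + deg3 c = 3 then 6 / efact c * mon_eval b p * mon_eval c p else 0)"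
  using efact_nz[of "eadd b c"] efact_nz[of c]
  by (simp add: cube_def dfac_eq deg3_eadd mon_eval_eadd field_simps)

lemma hom_vanish:
  assumes "is_poly3 D" "\<forall>t. eval3 D (t * fst p, t * fst (snd p), t * snd (snd p)) = 0"
  shows "(\<Sum>b\<in>supp3 D. if deg3 b = k then D b * mon_eval b p else 0) = 0"
proof -
  define P where "P = (\<Sum>b\<in>supp3 D. monom (D b * mon_eval b p) (deg3 b))"
  have "\<forall>t. poly P t = 0"
  proof
    fix t
    have "poly P t = (\<Sum>b\<in>supp3 D. D b * mon_eval b p * t ^ deg3 b)"
      by (simp add: P_def poly_sum poly_monom)
    also have "\<dots> = eval3 D (t * fst p, t * fst (snd p), t * snd (snd p))"
      by (simp add: eval3_def mon_eval_scale mult_ac)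
    finally show "poly P t = 0" using assms(2) by simp
  qed
  then have "P = 0" using poly_all_0_iff_0 by blast
  then have "coeff P k = 0" by simp
  then show ?thesis by (simp add: P_def coeff_sum)
qed

lemma apolar_from_decomp:
  fixes pts :: "nat \<Rightarrow> cvec3" and c :: "nat \<Rightarrow> complex"
  assumes D: "is_poly3 D"
    and van: "\<And>i. i < n \<Longrightarrow> \<forall>t. eval3 D (t * fst (pts i), t * fst (snd (pts i)), t * snd (snd (pts i))) = 0"
    and dec: "\<And>e. F e = (\<Sum>i<n. c i * cube (pts i) e)"
  shows "apolar_act D F = (\<lambda>_. 0)"
proof
  fix x
  have inner: "(\<Sum>b\<in>supp3 D. D b * (cube (pts i) (eadd b x) * dfac b x)) = 0" if "i < n" for i
  proof -
    have "(\<Sum>b\<in>supp3 D. D b * (cube (pts i) (eadd b x) * dfac b x))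
       = (\<Sum>b\<in>supp3 D. (if deg3 x \<le> 3 then 6 / efact x * mon_eval x (pts i) else 0) *
             (if deg3 b = 3 - deg3 x then D b * mon_eval b (pts i) else 0))"
      by (rule sum.cong) (auto simp: cube_dfac)
    also have "\<dots> = (if deg3 x \<le> 3 then 6 / efact x * mon_eval x (pts i) else 0) *
        (\<Sum>b\<in>supp3 D. if deg3 b = 3 - deg3 x then D b * mon_eval b (pts i) else 0)"
      by (simp add: sum_distrib_left)
    also have "\<dots> = 0" using hom_vanish[OF D van[OF that]] by simp
    finally show ?thesis .
  qed
  have "apolar_act D F x = (\<Sum>b\<in>supp3 D. D b * (\<Sum>i<n. c i * cube (pts i) (eadd b x)) * dfac b x)"
    by (simp add: apolar_act_def dec)
  also have "\<dots> = (\<Sum>i<n. c i * (\<Sum>b\<in>supp3 D. D b * (cube (pts i) (eadd b x) * dfac b x)))"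
    by (simp add: sum_distrib_left sum_distrib_right mult_ac sum.swap[where A="supp3 D"])
  also have "\<dots> = 0" using inner by simp
  finally show "apolar_act D F x = 0" .
qed


definition cp :: "cvec3 \<Rightarrow> nat \<Rightarrow> complex" where
  "cp v i = (if i = 0 then fst v else if i = 1 then fst (snd v) else snd (snd v))"

definition triT :: "(nat \<Rightarrow> nat \<Rightarrow> nat \<Rightarrow> complex) \<Rightarrow> cvec3 \<Rightarrow> cvec3 \<Rightarrow> cvec3 \<Rightarrow> complex" where
  "triT T u v w = (\<Sum>i<3. \<Sum>j<3. \<Sum>k<3. T i j k * cp u i * cp v j * cp w k)"

definition symT :: "(nat \<Rightarrow> nat \<Rightarrow> nat \<Rightarrow> complex) \<Rightarrow> bool" where
  "symT T \<longleftrightarrow> (\<forall>i j k. T i j k = T j i k \<and> T i j k = T i k j)"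

definition det3 :: "cvec3 \<Rightarrow> cvec3 \<Rightarrow> cvec3 \<Rightarrow> complex" where
  "det3 u v w = fst u * (fst (snd v) * snd (snd w) - snd (snd v) * fst (snd w))
              - fst (snd u) * (fst v * snd (snd w) - snd (snd v) * fst w)
              + snd (snd u) * (fst v * fst (snd w) - fst (snd v) * fst w)"

definition cross :: "cvec3 \<Rightarrow> cvec3 \<Rightarrow> cvec3" where
  "cross u v = (fst (snd u) * snd (snd v) - snd (snd u) * fst (snd v),
                snd (snd u) * fst v - fst u * snd (snd v),
                fst u * fst (snd v) - fst (snd u) * fst v)"

definition vlc :: "complex \<Rightarrow> cvec3 \<Rightarrow> complex \<Rightarrow> cvec3 \<Rightarrow> complex \<Rightarrow> cvec3 \<Rightarrow> cvec3" where
  "vlc a x b y c z = (a * fst x + b * fst y + c * fst z,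
                      a * fst (snd x) + b * fst (snd y) + c * fst (snd z),
                      a * snd (snd x) + b * snd (snd y) + c * snd (snd z))"

lemma sum3: "(\<Sum>i<(3::nat). f i) = f 0 + f 1 + (f 2 :: complex)"
  by (simp add: numeral_3_eq_3 lessThan_Suc add_ac numeral_2_eq_2)

lemma triT_expl: "triT T (a0,a1,a2) (b0,b1,b2) (c0,c1,c2) = T 0 0 0 * a0 * b0 * c0 + T 0 0 1 * a0 * b0 * c1 + T 0 0 2 * a0 * b0 * c2 + T 0 1 0 * a0 * b1 * c0 + T 0 1 1 * a0 * b1 * c1 + T 0 1 2 * a0 * b1 * c2 + T 0 2 0 * a0 * b2 * c0 + T 0 2 1 * a0 * b2 * c1 + T 0 2 2 * a0 * b2 * c2 + T 1 0 0 * a1 * b0 * c0 + T 1 0 1 * a1 * b0 * c1 + T 1 0 2 * a1 * b0 * c2 + T 1 1 0 * a1 * b1 * c0 + T 1 1 1 * a1 * b1 * c1 + T 1 1 2 * a1 * b1 * c2 + T 1 2 0 * a1 * b2 * c0 + T 1 2 1 * a1 * b2 * c1 + T 1 2 2 * a1 * b2 * c2 + T 2 0 0 * a2 * b0 * c0 + T 2 0 1 * a2 * b0 * c1 + T 2 0 2 * a2 * b0 * c2 + T 2 1 0 * a2 * b1 * c0 + T 2 1 1 * a2 * b1 * c1 + T 2 1 2 * a2 * b1 * c2 + T 2 2 0 * a2 * b2 * c0 + T 2 2 1 * a2 * b2 * c1 + T 2 2 2 * a2 * b2 * c2"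
  by (simp add: triT_def sum3 cp_def add_ac)

lemma symT_eqs:
  assumes "symT T"
  shows "T 0 1 0 = T 0 0 1" "T 0 2 0 = T 0 0 2" "T 0 2 1 = T 0 1 2" "T 1 0 0 = T 0 0 1" "T 1 0 1 = T 0 1 1" "T 1 0 2 = T 0 1 2" "T 1 1 0 = T 0 1 1" "T 1 2 0 = T 0 1 2" "T 1 2 1 = T 1 1 2" "T 2 0 0 = T 0 0 2" "T 2 0 1 = T 0 1 2" "T 2 0 2 = T 0 2 2" "T 2 1 0 = T 0 1 2" "T 2 1 1 = T 1 1 2" "T 2 1 2 = T 1 2 2" "T 2 2 0 = T 0 2 2" "T 2 2 1 = T 1 2 2"
  using assms unfolding symT_def by metis+

lemma triS:
  assumes "symT T"
  shows "triT T (a0,a1,a2) (b0,b1,b2) (c0,c1,c2) = T 0 0 0 * (a0 * b0 * c0) + T 0 0 1 * (a0 * b0 * c1 + a0 * b1 * c0 + a1 * b0 * c0) + T 0 0 2 * (a0 * b0 * c2 + a0 * b2 * c0 + a2 * b0 * c0) + T 0 1 1 * (a0 * b1 * c1 + a1 * b0 * c1 + a1 * b1 * c0) + T 0 1 2 * (a0 * b1 * c2 + a0 * b2 * c1 + a1 * b0 * c2 + a1 * b2 * c0 + a2 * b0 * c1 + a2 * b1 * c0) + T 0 2 2 * (a0 * b2 * c2 + a2 * b0 * c2 + a2 * b2 * c0) + T 1 1 1 * (a1 * b1 * c1) + T 1 1 2 * (a1 * b1 * c2 + a1 * b2 * c1 + a2 * b1 * c1) + T 1 2 2 * (a1 * b2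 * c2 + a2 * b1 * c2 + a2 * b2 * c1) + T 2 2 2 * (a2 * b2 * c2)"
  unfolding triT_expl symT_eqs[OF assms] by (simp add: algebra_simps)

lemma triT_lin1: "triT T (vlc a x b y c z) v w = a * triT T x v w + b * triT T y v w + c * triT T z v w"
  by (cases x, cases y, cases z, cases v, cases w) (simp add: triT_expl vlc_def algebra_simps)

lemma triT_swap12: "symT T \<Longrightarrow> triT T u v w = triT T v u w"
  by (cases u, cases v, cases w) (simp add: triS algebra_simps)

lemma triT_swap23: "symT T \<Longrightarrow> triT T u v w = triT T u w v"
  by (cases u, cases v, cases w) (simp add: triS algebra_simps)

lemma triT_lin2: "triT T u (vlc a x b y c z) w = a * triT T u x w + b * triT T u y w + c * triT T u z w"
  by (cases x, cases y, cases z, cases u, cases w) (simp add: triT_expl vlc_def algebra_simps)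

lemma triT_lin3: "triT T u v (vlc a x b y c z) = a * triT T u v x + b * triT T u v y + c * triT T u v z"
  by (cases x, cases y, cases z, cases u, cases v) (simp add: triT_expl vlc_def algebra_simps)

definition mv :: "cvec3 \<Rightarrow> cvec3 \<Rightarrow> cvec3 \<Rightarrow> nat \<Rightarrow> cvec3" where
  "mv m0 m1 m2 i = (if i = 0 then m0 else if i = 1 then m1 else m2)"

definition pullT :: "(nat \<Rightarrow> nat \<Rightarrow> nat \<Rightarrow> complex) \<Rightarrow> cvec3 \<Rightarrow> cvec3 \<Rightarrow> cvec3 \<Rightarrow> nat \<Rightarrow> nat \<Rightarrow> nat \<Rightarrow> complex" where
  "pullT T m0 m1 m2 i j k = triT T (mv m0 m1 m2 i) (mv m0 m1 m2 j) (mv m0 m1 m2 k)"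

definition comb :: "cvec3 \<Rightarrow> cvec3 \<Rightarrow> cvec3 \<Rightarrow> cvec3 \<Rightarrow> cvec3" where
  "comb m0 m1 m2 g = vlc (fst g) m0 (fst (snd g)) m1 (snd (snd g)) m2"

lemma pull_tri: "triT (pullT T m0 m1 m2) g d e = triT T (comb m0 m1 m2 g) (comb m0 m1 m2 d) (comb m0 m1 m2 e)"
  by (cases g, cases d, cases e)
     (simp add: triT_expl[of "pullT T m0 m1 m2"] comb_def triT_lin1 triT_lin2 triT_lin3 pullT_def mv_def algebra_simps)

lemma symT_pull: assumes "symT T" shows "symT (pullT T m0 m1 m2)"
  unfolding symT_def pullT_def using triT_swap12[OF assms] triT_swap23[OF assms] by blast

lemma det3_comb: "det3 (comb m0 m1 m2 g) (comb m0 m1 m2 d) (comb m0 m1 m2 e) = det3 m0 m1 m2 * det3 g d e"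
  by (cases g, cases d, cases e, cases m0, cases m1, cases m2) (simp add: det3_def comb_def vlc_def algebra_simps)

definition GoodT :: "(nat \<Rightarrow> nat \<Rightarrow> nat \<Rightarrow> complex) \<Rightarrow> bool" where
  "GoodT T \<longleftrightarrow> (\<exists>l1 l2 l3 l4. det3 l1 l2 l3 \<noteq> 0 \<and> det3 l1 l2 l4 \<noteq> 0 \<and> det3 l1 l3 l4 \<noteq> 0 \<and> det3 l2 l3 l4 \<noteq> 0
     \<and> triT T l1 l2 l3 = 0 \<and> triT T l1 l2 l4 = 0 \<and> triT T l1 l3 l4 = 0 \<and> triT T l2 l3 l4 = 0)"

lemma GoodT_pull:
  assumes "det3 m0 m1 m2 \<noteq> 0" "GoodT (pullT T m0 m1 m2)"
  shows "GoodT T"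
proof -
  obtain l1 l2 l3 l4 where L: "det3 l1 l2 l3 \<noteq> 0" "det3 l1 l2 l4 \<noteq> 0" "det3 l1 l3 l4 \<noteq> 0" "det3 l2 l3 l4 \<noteq> 0"
     "triT (pullT T m0 m1 m2) l1 l2 l3 = 0" "triT (pullT T m0 m1 m2) l1 l2 l4 = 0"
     "triT (pullT T m0 m1 m2) l1 l3 l4 = 0" "triT (pullT T m0 m1 m2) l2 l3 l4 = 0"
    using assms(2) unfolding GoodT_def by blast
  show ?thesis unfolding GoodT_def
    apply (rule exI[of _ "comb m0 m1 m2 l1"], rule exI[of _ "comb m0 m1 m2 l2"],
           rule exI[of _ "comb m0 m1 m2 l3"], rule exI[of _ "comb m0 m1 m2 l4"])
    using L assms(1) by (simp add: det3_comb pull_tri[symmetric])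
qed


definition Ev :: "nat \<Rightarrow> expo" where
  "Ev i = (if i = 0 then (1,0,0) else if i = 1 then (0,1,0) else (0,0,1))"

definition ex3 :: "nat \<Rightarrow> nat \<Rightarrow> nat \<Rightarrow> expo" where
  "ex3 i j k = eadd (Ev i) (eadd (Ev j) (Ev k))"

definition Tc :: "cpoly3 \<Rightarrow> nat \<Rightarrow> nat \<Rightarrow> nat \<Rightarrow> complex" where
  "Tc F i j k = F (ex3 i j k) * efact (ex3 i j k) / 6"

lemma symT_Tc: "symT (Tc F)"
proof -
  have "ex3 i j k = ex3 j i k \<and> ex3 i j k = ex3 i k j" for i j k
    by (simp add: ex3_def eadd_def add_ac)
  then show ?thesis unfolding symT_def Tc_def by metis
qed

lemma mon_eval_Ev: "mon_eval (Ev i) p = cp p i"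
  by (simp add: Ev_def mon_eval_def cp_def)

lemma mon_eval_ex3: "mon_eval (ex3 i j k) p = cp p i * cp p j * cp p k"
  by (simp add: ex3_def mon_eval_eadd mon_eval_Ev)

lemma deg3_ex:
  assumes "deg3 e = 3"
  shows "\<exists>i<3. \<exists>j<3. \<exists>k<3. e = ex3 i j k"
proof -
  obtain a b c where e: "e = (a,b,c)" by (cases e)
  with assms have s: "a + b + c = 3" by (simp add: deg3_def)
  define i where "i = (if a > 0 then 0 else if b > 0 then 1 else (2::nat))"
  define j where "j = (if a > 1 then 0 else if a + b > 1 then 1 else (2::nat))"
  define k where "k = (if a > 2 then 0 else if a + b > 2 then 1 else (2::nat))"
  have "(a=0 \<and> b=0 \<and> c=3) \<or> (a=0 \<and> b=1 \<and> c=2) \<or> (a=0 \<and> b=2 \<and> c=1) \<or> (a=0 \<and> b=3 \<and> c=0)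
      \<or> (a=1 \<and> b=0 \<and> c=2) \<or> (a=1 \<and> b=1 \<and> c=1) \<or> (a=1 \<and> b=2 \<and> c=0) \<or> (a=2 \<and> b=0 \<and> c=1)
      \<or> (a=2 \<and> b=1 \<and> c=0) \<or> (a=3 \<and> b=0 \<and> c=0)" using s by presburger
  then have "e = ex3 i j k" unfolding e i_def j_def k_def
    by (elim disjE) (simp_all add: ex3_def eadd_def Ev_def)
  moreover have "i < 3" "j < 3" "k < 3" by (simp_all add: i_def j_def k_def)
  ultimately show ?thesis by blast
qed

lemma triT_diff: "triT (\<lambda>i j k. A i j k - B i j k) u v w = triT A u v w - triT B u v w"
  by (simp add: triT_def sum_subtractf left_diff_distrib)

lemma triT_add: "triT (\<lambda>i j k. A i j k + B i j k) u v w = triT A u v w + triT B u v w"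
  by (simp add: triT_def sum.distrib distrib_right)

lemma triT_sum: fixes n :: nat shows "triT (\<lambda>i j k. \<Sum>q<n. f q i j k) u v w = (\<Sum>q<n. triT (f q) u v w)"
proof (induction n)
  case 0
  then show ?case by (simp add: triT_def)
next
  case (Suc n)
  have "triT (\<lambda>i j k. \<Sum>q<Suc n. f q i j k) u v w = triT (\<lambda>i j k. (\<Sum>q<n. f q i j k) + f n i j k) u v w"
    by simp
  also have "\<dots> = triT (\<lambda>i j k. \<Sum>q<n. f q i j k) u v w + triT (f n) u v w"
    by (rule triT_add)
  finally show ?case using Suc by simp
qed

lemma triT_rank1: "triT (\<lambda>i j k. c * cp p i * cp p j * cp p k) u v w = c * lin_eval p u * lin_eval p v * lin_eval p w"
  by (cases p, cases u, cases v, cases w) (simp add: triT_expl cp_def lin_eval_def algebra_simps)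

lemma triT_zero: "(\<And>a b c. a < 3 \<Longrightarrow> b < 3 \<Longrightarrow> c < 3 \<Longrightarrow> S a b c = 0) \<Longrightarrow> triT S u v w = 0"
  by (simp add: triT_def)

definition unitv :: "nat \<Rightarrow> cvec3" where
  "unitv i = (if i = 0 then (1,0,0) else if i = 1 then (0,1,0) else (0,0,1))"

lemma triT_unit:
  assumes "i < 3" "j < 3" "k < 3"
  shows "triT T (unitv i) (unitv j) (unitv k) = T i j k"
proof -
  have "i = 0 \<or> i = 1 \<or> i = 2" "j = 0 \<or> j = 1 \<or> j = 2" "k = 0 \<or> k = 1 \<or> k = 2" using assms by auto
  then show ?thesis by (auto simp: unitv_def triT_expl)
qed

lemma comb_div: "comb L0 L1 L2 (x / d, y / d, z / d) =
   (fst (comb L0 L1 L2 (x,y,z)) / d, fst (snd (comb L0 L1 L2 (x,y,z))) / d, snd (snd (comb L0 L1 L2 (x,y,z))) / d)"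
  by (simp add: comb_def vlc_def add_divide_distrib)

lemma comb_cross:
  "comb L0 L1 L2 (cp (cross L1 L2) i, cp (cross L2 L0) i, cp (cross L0 L1) i) =
     (if i = 0 then (det3 L0 L1 L2, 0, 0) else if i = 1 then (0, det3 L0 L1 L2, 0) else (0, 0, det3 L0 L1 L2))"
  by (cases L0, cases L1, cases L2) (simp add: comb_def vlc_def cp_def cross_def det3_def algebra_simps)

lemma unit_comb:
  assumes "det3 L0 L1 L2 \<noteq> 0"
  shows "unitv i = comb L0 L1 L2 (cp (cross L1 L2) i / det3 L0 L1 L2, cp (cross L2 L0) i / det3 L0 L1 L2, cp (cross L0 L1) i / det3 L0 L1 L2)"
  unfolding comb_div comb_cross using assms by (simp add: unitv_def)

lemma lin_eval_cross: "lin_eval (cross u v) w = det3 u v w"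
  by (simp add: lin_eval_def cross_def det3_def algebra_simps)

lemma lin_eval_comm: "lin_eval u v = lin_eval v u"
  by (simp add: lin_eval_def mult.commute)

lemma indep_of_det: "det3 u v w \<noteq> 0 \<Longrightarrow> lin_indep3 u v w"
  unfolding lin_indep3_def
proof (intro allI impI)
  fix a b c :: complex
  assume d: "det3 u v w \<noteq> 0" and h: "a * fst u + b * fst v + c * fst w = 0 \<and>
        a * fst (snd u) + b * fst (snd v) + c * fst (snd w) = 0 \<and>
        a * snd (snd u) + b * snd (snd v) + c * snd (snd w) = 0"
  have "a * det3 u v w = 0" "b * det3 u v w = 0" "c * det3 u v w = 0"
    using h unfolding det3_def by algebra+
  with d show "a = 0 \<and> b = 0 \<and> c = 0" by simp
qed

lemma lin_eval_cross1: "lin_eval u (cross u v) = 0"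
  by (simp add: lin_eval_def cross_def algebra_simps)

lemma lin_eval_cross2: "lin_eval v (cross u v) = 0"
  by (simp add: lin_eval_def cross_def algebra_simps)

lemma lessThan6: "{..<(6::nat)} = {0,1,2,3,4,5}"
  by auto

lemma GL_norm:
  fixes F :: cpoly3 and L0 L1 L2 :: cvec3
  assumes F: "is_form3 3 F" and Dn: "det3 L0 L1 L2 \<noteq> 0"
   and t1: "triT (Tc F) L0 L1 L2 = 0" and t2: "triT (Tc F) L0 L1 (vlc 1 L0 1 L1 1 L2) = 0"
   and t3: "triT (Tc F) L0 L2 (vlc 1 L0 1 L1 1 L2) = 0" and t4: "triT (Tc F) L1 L2 (vlc 1 L0 1 L1 1 L2) = 0"
  shows "\<exists>l. star_forms4 l \<and> ideal_of_points (star_points4 l) \<subseteq> perp F"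
proof -
  define L3 where "L3 = vlc 1 L0 1 L1 1 L2"
  define T where "T = Tc F"
  have sT: "symT T" by (simp add: T_def symT_Tc)
  define D where "D = det3 L0 L1 L2"
  have DD: "D \<noteq> 0" using Dn D_def by simp
  define Psi where "Psi = pullT T L0 L1 L2"
  have sP: "symT Psi" using symT_pull[OF sT] Psi_def by simp
  have PsiE: "Psi a b c = triT T (mv L0 L1 L2 a) (mv L0 L1 L2 b) (mv L0 L1 L2 c)" for a b c
    by (simp add: Psi_def pullT_def)
  note ps = symT_eqs[OF sP]
  have c1: "Psi 0 1 2 = 0" using t1 by (simp add: PsiE mv_def T_def)
  have "Psi 0 1 0 + Psi 0 1 1 + Psi 0 1 2 = 0" using t2 by (simp add: PsiE mv_def T_def triT_lin3)
  then have c2: "Psi 0 0 1 + Psi 0 1 1 = 0" using c1 ps by simp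
  have "Psi 0 2 0 + Psi 0 2 1 + Psi 0 2 2 = 0" using t3 by (simp add: PsiE mv_def T_def triT_lin3)
  then have c3: "Psi 0 0 2 + Psi 0 2 2 = 0" using c1 ps by simp
  have "Psi 1 2 0 + Psi 1 2 1 + Psi 1 2 2 = 0" using t4 by (simp add: PsiE mv_def T_def triT_lin3)
  then have c4: "Psi 1 1 2 + Psi 1 2 2 = 0" using c1 ps by simp
  define P where "P = (\<lambda>q. [cross L0 L1, cross L0 L2, cross L1 L2, cross L0 L3, cross L1 L3, cross L2 L3] ! q)"
  define dd where "dd = (\<lambda>q. [Psi 2 2 2 - Psi 1 1 2 - Psi 0 0 2, - Psi 1 1 1 - Psi 1 1 2 + Psi 0 0 1,
      Psi 0 0 0 + Psi 0 0 2 + Psi 0 0 1, Psi 1 1 2, - Psi 0 0 2, Psi 0 0 1] ! q)"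
  define y where "y = (\<lambda>q. [(0,0,1), (0,-1,0), (1,0,0), (0,-1,1), (1,0,-1), (-1,1,0)] ! q :: cvec3)"
  define c where "c = (\<lambda>q. dd q / D^3)"
  have pair: "lin_eval (P q) (mv L0 L1 L2 a) = D * cp (y q) a" if "q < 6" "a < 3" for q a
  proof -
    have "q = 0 \<or> q = 1 \<or> q = 2 \<or> q = 3 \<or> q = 4 \<or> q = 5" "a = 0 \<or> a = 1 \<or> a = 2" using that by auto
    then show ?thesis
      by (auto simp: P_def y_def mv_def cp_def lin_eval_cross D_def L3_def det3_def vlc_def algebra_simps)
  qed
  have key: "Psi a b c' = (\<Sum>q<6. dd q * cp (y q) a * cp (y q) b * cp (y q) c')" if "a < 3" "b < 3" "c' < 3" for a b c'
  proof -
    have abc: "a = 0 \<or> a = 1 \<or> a = 2" "b = 0 \<or> b = 1 \<or> b = 2" "c' = 0 \<or> c' = 1 \<or> c' = 2" using that by auto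
    have c': "Psi 0 1 1 = - Psi 0 0 1" "Psi 0 2 2 = - Psi 0 0 2" "Psi 1 2 2 = - Psi 1 1 2"
      using c2 c3 c4 by (simp_all add: eq_neg_iff_add_eq_0 add.commute)
    show ?thesis using abc c1 c2 c3 c4 c' c'[unfolded One_nat_def] c1[unfolded One_nat_def] c2[unfolded One_nat_def] c3[unfolded One_nat_def] c4[unfolded One_nat_def]
      by (auto simp: lessThan6 dd_def y_def cp_def ps ps[unfolded One_nat_def] algebra_simps)
  qed
  define R where "R = (\<lambda>i j k. \<Sum>q<6. c q * cp (P q) i * cp (P q) j * cp (P q) k)"
  define T' where "T' = (\<lambda>i j k. T i j k - R i j k)"
  have triT': "triT T' u v w = triT T u v w - (\<Sum>q<6. c q * lin_eval (P q) u * lin_eval (P q) v * lin_eval (P q) w)" for u v w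
    unfolding T'_def R_def triT_diff triT_sum[of "\<lambda>q i j k. c q * cp (P q) i * cp (P q) j * cp (P q) k"] triT_rank1
    by simp
  have van: "triT T' (mv L0 L1 L2 a) (mv L0 L1 L2 b) (mv L0 L1 L2 c') = 0" if "a < 3" "b < 3" "c' < 3" for a b c'
  proof -
    have "(\<Sum>q<6. c q * lin_eval (P q) (mv L0 L1 L2 a) * lin_eval (P q) (mv L0 L1 L2 b) * lin_eval (P q) (mv L0 L1 L2 c'))
        = (\<Sum>q<6. dd q * cp (y q) a * cp (y q) b * cp (y q) c')"
      by (rule sum.cong) (use that DD in \<open>simp_all add: pair c_def power3_eq_cube\<close>)
    then show ?thesis using key[OF that] by (simp add: triT' PsiE[symmetric])
  qed
  have T'0: "T' i j k = 0" if "i < 3" "j < 3" "k < 3" for i j k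
  proof -
    have "T' i j k = triT T' (unitv i) (unitv j) (unitv k)" using triT_unit that by simp
    also have "\<dots> = triT (pullT T' L0 L1 L2)
        (cp (cross L1 L2) i / det3 L0 L1 L2, cp (cross L2 L0) i / det3 L0 L1 L2, cp (cross L0 L1) i / det3 L0 L1 L2)
        (cp (cross L1 L2) j / det3 L0 L1 L2, cp (cross L2 L0) j / det3 L0 L1 L2, cp (cross L0 L1) j / det3 L0 L1 L2)
        (cp (cross L1 L2) k / det3 L0 L1 L2, cp (cross L2 L0) k / det3 L0 L1 L2, cp (cross L0 L1) k / det3 L0 L1 L2)"
      unfolding pull_tri using unit_comb[OF Dn] by simp
    also have "\<dots> = 0"
      by (rule triT_zero) (simp add: pullT_def van)
    finally show ?thesis .
  qed
  have dec: "F e = (\<Sum>q<6. c q * cube (P q) e)" for e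
  proof (cases "deg3 e = 3")
    case True
    then obtain i j k where ijk: "i < 3" "j < 3" "k < 3" "e = ex3 i j k" using deg3_ex by blast
    have "F e = 6 / efact e * T i j k" using efact_nz[of e] ijk(4) by (simp add: T_def Tc_def)
    also have "\<dots> = 6 / efact e * R i j k" using T'0[OF ijk(1-3)] by (simp add: T'_def)
    also have "\<dots> = (\<Sum>q<6. c q * cube (P q) e)"
      using True unfolding ijk(4) by (simp add: R_def cube_def sum_distrib_left mon_eval_ex3 mult_ac)
    finally show ?thesis .
  next
    case False
    then have "F e = 0" using F unfolding is_form3_def by blast
    then show ?thesis using False by (simp add: cube_def)
  qed
  define l where "l = (\<lambda>i::nat. if i = 0 then L0 else if i = 1 then L1 else if i = 2 then L2 else L3)"
  have dets: "det3 L0 L1 L2 = D"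
      "det3 L0 L1 L3 = D"
      "det3 L0 L2 L1 = - D"
      "det3 L0 L2 L3 = - D"
      "det3 L0 L3 L1 = - D"
      "det3 L0 L3 L2 = D"
      "det3 L1 L0 L2 = - D"
      "det3 L1 L0 L3 = - D"
      "det3 L1 L2 L0 = D"
      "det3 L1 L2 L3 = D"
      "det3 L1 L3 L0 = D"
      "det3 L1 L3 L2 = - D"
      "det3 L2 L0 L1 = D"
      "det3 L2 L0 L3 = D"
      "det3 L2 L1 L0 = - D"
      "det3 L2 L1 L3 = - D"
      "det3 L2 L3 L0 = - D"
      "det3 L2 L3 L1 = D"
      "det3 L3 L0 L1 = D"
      "det3 L3 L0 L2 = - D"
      "det3 L3 L1 L0 = - D"
      "det3 L3 L1 L2 = D"
      "det3 L3 L2 L0 = D"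
      "det3 L3 L2 L1 = - D"
    by (simp_all add: D_def L3_def det3_def vlc_def algebra_simps)
  have sf: "star_forms4 l"
    unfolding star_forms4_def
  proof (intro allI impI)
    fix i j k :: nat
    assume h: "i < 4 \<and> j < 4 \<and> k < 4 \<and> i \<noteq> j \<and> i \<noteq> k \<and> j \<noteq> k"
    then have "i = 0 \<or> i = 1 \<or> i = 2 \<or> i = 3" "j = 0 \<or> j = 1 \<or> j = 2 \<or> j = 3" "k = 0 \<or> k = 1 \<or> k = 2 \<or> k = 3"
      by auto
    then have "det3 (l i) (l j) (l k) \<noteq> 0" using h DD by (auto simp: l_def dets)
    then show "lin_indep3 (l i) (l j) (l k)" by (rule indep_of_det)
  qed
  have inX: "P q \<in> star_points4 l" if "q < 6" for q
  proof -
    define a where "a = (if q = 0 then 2 else if q = 1 then 1 else if q = 2 then 0 else if q = 3 then 1 else (0::nat))"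
    have qs: "q = 0 \<or> q = 1 \<or> q = 2 \<or> q = 3 \<or> q = 4 \<or> q = 5" using that by auto
    have a3: "a < 3" by (simp add: a_def)
    have ya: "cp (y q) a \<noteq> 0" using qs by (elim disjE) (simp_all add: a_def y_def cp_def)
    have nz: "P q \<noteq> (0,0,0)"
    proof
      assume z: "P q = (0,0,0)"
      have "lin_eval (P q) (mv L0 L1 L2 a) = 0" using z by (simp add: lin_eval_def)
      with pair[OF that a3] DD ya show False by simp
    qed
    have "\<exists>i j. i < j \<and> j < 4 \<and> lin_eval (l i) (P q) = 0 \<and> lin_eval (l j) (P q) = 0"
      using qs
    proof (elim disjE)
      assume "q = 0" then show ?thesis
        by (intro exI[of _ 0] exI[of _ 1]) (simp add: l_def P_def lin_eval_cross1 lin_eval_cross2)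
    next
      assume "q = 1" then show ?thesis
        by (intro exI[of _ 0] exI[of _ 2]) (simp add: l_def P_def lin_eval_cross1 lin_eval_cross2)
    next
      assume "q = 2" then show ?thesis
        by (intro exI[of _ 1] exI[of _ 2]) (simp add: l_def P_def lin_eval_cross1 lin_eval_cross2)
    next
      assume "q = 3" then show ?thesis
        by (intro exI[of _ 0] exI[of _ 3]) (simp add: l_def P_def lin_eval_cross1 lin_eval_cross2)
    next
      assume "q = 4" then show ?thesis
        by (intro exI[of _ 1] exI[of _ 3]) (simp add: l_def P_def lin_eval_cross1 lin_eval_cross2)
    next
      assume "q = 5" then show ?thesis
        by (intro exI[of _ 2] exI[of _ 3]) (simp add: l_def P_def lin_eval_cross1 lin_eval_cross2)
    qed
    with nz show ?thesis unfolding star_points4_def by blast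
  qed
  have "ideal_of_points (star_points4 l) \<subseteq> perp F"
  proof
    fix Dp assume "Dp \<in> ideal_of_points (star_points4 l)"
    then have Dp: "is_poly3 Dp" "\<forall>v\<in>star_points4 l. \<forall>t. eval3 Dp (t * fst v, t * fst (snd v), t * snd (snd v)) = 0"
      unfolding ideal_of_points_def by auto
    have "apolar_act Dp F = (\<lambda>_. 0)"
      by (rule apolar_from_decomp[where n=6 and pts=P and c=c]) (use Dp inX dec in auto)
    then show "Dp \<in> perp F" using Dp(1) unfolding perp_def by simp
  qed
  with sf show ?thesis by blast
qed


lemma exists_nonroot: "(p :: complex poly) \<noteq> 0 \<Longrightarrow> \<exists>x. poly p x \<noteq> 0"
  using poly_all_0_iff_0 by blast

lemma side_choice:
  fixes A0 A2 A22 :: complex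
  assumes "\<not> (A0 = 0 \<and> A2 = 0 \<and> A22 \<noteq> 0)"
  shows "\<exists>\<alpha> a. a \<noteq> 0 \<and> a * (A2 + \<alpha> * A0) + (A22 + 2 * \<alpha> * A2 + \<alpha>^2 * A0) = 0"
proof (cases "A0 = 0")
  case False
  let ?p = "[:A2, A0:] * [:A22, 2 * A2, A0:]"
  have "?p \<noteq> 0" using False by simp
  then obtain x where x: "poly ?p x \<noteq> 0" using exists_nonroot by blast
  have f: "poly [:A2, A0:] x \<noteq> 0" "poly [:A22, 2 * A2, A0:] x \<noteq> 0" using x unfolding poly_mult by (metis mult_zero_left mult_zero_right)+
  have X1: "A2 + x * A0 \<noteq> 0" using f(1) by simp
  have "A22 + 2 * x * A2 + x^2 * A0 = poly [:A22, 2 * A2, A0:] x" by (simp add: algebra_simps power2_eq_square)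
  then have X2: "A22 + 2 * x * A2 + x^2 * A0 \<noteq> 0" using f(2) by metis
  show ?thesis
  proof (intro exI conjI)
    show "- (A22 + 2 * x * A2 + x^2 * A0) / (A2 + x * A0) \<noteq> 0" by (metis X1 X2 divide_eq_0_iff neg_equal_0_iff_equal)
    show "- (A22 + 2 * x * A2 + x^2 * A0) / (A2 + x * A0) * (A2 + x * A0) + (A22 + 2 * x * A2 + x^2 * A0) = 0"
      using X1 by simp
  qed
next
  case True
  show ?thesis
  proof (cases "A2 = 0")
    case False
    show ?thesis
      apply (rule exI[of _ "(1 - A22) / (2 * A2)"], rule exI[of _ "- 1 / A2"])
      using True False by (simp add: field_simps)
  next
    case False': True
    then have "A22 = 0" using assms True by simp
    then show ?thesis using True False' by (intro exI[of _ 0] exI[of _ 1]) simp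
  qed
qed

lemma PR:
  assumes sT: "symT T" and z: "T 0 0 1 = 0" "T 0 1 1 = 0" "T 0 1 2 = 0"
   and nf1: "\<not> (T 0 0 0 = 0 \<and> T 0 0 2 = 0 \<and> T 0 2 2 \<noteq> 0)"
   and nf2: "\<not> (T 1 1 1 = 0 \<and> T 1 1 2 = 0 \<and> T 1 2 2 \<noteq> 0)"
  shows "GoodT T"
proof -
  obtain \<alpha> a where a: "a \<noteq> 0" "a * (T 0 0 2 + \<alpha> * T 0 0 0) + (T 0 2 2 + 2 * \<alpha> * T 0 0 2 + \<alpha>^2 * T 0 0 0) = 0"
    using side_choice[OF nf1] by blast
  obtain \<beta> b where b: "b \<noteq> 0" "b * (T 1 1 2 + \<beta> * T 1 1 1) + (T 1 2 2 + 2 * \<beta> * T 1 1 2 + \<beta>^2 * T 1 1 1) = 0"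
    using side_choice[OF nf2] by blast
  have e1: "triT T (1,0,0) (0,1,0) (\<alpha>,\<beta>,1) = 0" using z by (simp add: triS[OF sT])
  have e2: "triT T (1,0,0) (0,1,0) (a+\<alpha>,b+\<beta>,1) = 0" using z by (simp add: triS[OF sT])
  have "triT T (1,0,0) (\<alpha>,\<beta>,1) (a+\<alpha>,b+\<beta>,1) = a * (T 0 0 2 + \<alpha> * T 0 0 0) + (T 0 2 2 + 2 * \<alpha> * T 0 0 2 + \<alpha>^2 * T 0 0 0)"
    using z by (simp add: triS[OF sT] algebra_simps power2_eq_square)
  then have e3: "triT T (1,0,0) (\<alpha>,\<beta>,1) (a+\<alpha>,b+\<beta>,1) = 0" using a by simp
  have "triT T (0,1,0) (\<alpha>,\<beta>,1) (a+\<alpha>,b+\<beta>,1) = b * (T 1 1 2 + \<beta> * T 1 1 1) + (T 1 2 2 + 2 * \<beta> * T 1 1 2 + \<beta>^2 * T 1 1 1)"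
    using z by (simp add: triS[OF sT] algebra_simps power2_eq_square)
  then have e4: "triT T (0,1,0) (\<alpha>,\<beta>,1) (a+\<alpha>,b+\<beta>,1) = 0" using b by simp
  show ?thesis unfolding GoodT_def
    apply (rule exI[of _ "(1,0,0)"], rule exI[of _ "(0,1,0)"], rule exI[of _ "(\<alpha>,\<beta>,1)"], rule exI[of _ "(a+\<alpha>, b+\<beta>, 1)"])
    using a b e1 e2 e3 e4 by (simp add: det3_def)
qed

definition Qf :: "(nat \<Rightarrow> nat \<Rightarrow> nat \<Rightarrow> complex) \<Rightarrow> complex \<Rightarrow> complex \<Rightarrow> complex \<Rightarrow> complex" where
  "Qf T x y z = T 1 1 1 * x * y * z + T 1 1 2 * (x * y + x * z + y * z) + T 1 2 2 * (x + y + z) + T 2 2 2"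

lemma FX_tri:
  assumes sT: "symT T" and z: "T 0 0 0 = 0" "T 0 0 1 = 0" "T 0 0 2 = 0" "T 0 1 1 = 0" "T 0 1 2 = 0"
  shows "triT T (x1,y1,1) (x2,y2,1) (x3,y3,1) = T 0 2 2 * (x1 + x2 + x3) + Qf T y1 y2 y3"
  using z by (simp add: triS[OF sT] Qf_def algebra_simps)

lemma detQ:
  "det3 (Qf T y2 y3 y4, y1, 1) (Qf T y1 y3 y4, y2, 1) (Qf T y1 y2 y4, y3, 1) = - (y1 - y2) * (y2 - y3) * (y3 - y1) * (T 1 1 1 * y4 + T 1 1 2)"
  unfolding det3_def Qf_def by simp algebra

lemma det_shift: "k \<noteq> 0 \<Longrightarrow> k * det3 (S + qa / k, ya, 1) (S + qb / k, yb, 1) (S + qc / k, yc, 1) = det3 (qa, ya, 1) (qb, yb, 1) (qc, yc, 1)"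
  unfolding det3_def by (simp add: field_simps)

lemma D123: "det3 (Qf T t2 t3 t4, t1, 1) (Qf T t1 t3 t4, t2, 1) (Qf T t1 t2 t4, t3, 1) = - (t1 - t2) * (t2 - t3) * (t3 - t1) * (T 1 1 1 * t4 + T 1 1 2)"
  unfolding det3_def Qf_def by simp algebra
lemma D124: "det3 (Qf T t2 t3 t4, t1, 1) (Qf T t1 t3 t4, t2, 1) (Qf T t1 t2 t3, t4, 1) = - (t1 - t2) * (t2 - t4) * (t4 - t1) * (T 1 1 1 * t3 + T 1 1 2)"
  unfolding det3_def Qf_def by simp algebra
lemma D134: "det3 (Qf T t2 t3 t4, t1, 1) (Qf T t1 t2 t4, t3, 1) (Qf T t1 t2 t3, t4, 1) = - (t1 - t3) * (t3 - t4) * (t4 - t1) * (T 1 1 1 * t2 + T 1 1 2)"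
  unfolding det3_def Qf_def by simp algebra
lemma D234: "det3 (Qf T t1 t3 t4, t2, 1) (Qf T t1 t2 t4, t3, 1) (Qf T t1 t2 t3, t4, 1) = - (t2 - t3) * (t3 - t4) * (t4 - t2) * (T 1 1 1 * t1 + T 1 1 2)"
  unfolding det3_def Qf_def by simp algebra

lemma FX:
  assumes sT: "symT T" and z: "T 0 0 0 = 0" "T 0 0 1 = 0" "T 0 0 2 = 0" "T 0 1 1 = 0" "T 0 1 2 = 0"
    and kz: "T 0 2 2 \<noteq> 0"
  shows "GoodT T"
proof (cases "T 1 1 1 = 0 \<and> T 1 1 2 = 0")
  case False
  define k where "k = T 0 2 2"
  have kk: "k \<noteq> 0" using kz k_def by simp
  define \<rho> where "\<rho> = (if T 1 1 1 = 0 then 0 else - T 1 1 2 / T 1 1 1)"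
  have nzt: "T 1 1 1 * (\<rho> + c) + T 1 1 2 \<noteq> 0" if "c \<noteq> 0" for c
    using False that by (cases "T 1 1 1 = 0") (auto simp: \<rho>_def field_simps)
  define t1 where "t1 = \<rho> + 1"
  define t2 where "t2 = \<rho> + 2"
  define t3 where "t3 = \<rho> + 3"
  define t4 where "t4 = \<rho> + 4"
  have n1: "T 1 1 1 * t1 + T 1 1 2 \<noteq> 0" unfolding t1_def by (rule nzt) simp
  have n2: "T 1 1 1 * t2 + T 1 1 2 \<noteq> 0" unfolding t2_def by (rule nzt) simp
  have n3: "T 1 1 1 * t3 + T 1 1 2 \<noteq> 0" unfolding t3_def by (rule nzt) simp
  have n4: "T 1 1 1 * t4 + T 1 1 2 \<noteq> 0" unfolding t4_def by (rule nzt) simp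
  define Q1 where "Q1 = Qf T t2 t3 t4"
  define Q2 where "Q2 = Qf T t1 t3 t4"
  define Q3 where "Q3 = Qf T t1 t2 t4"
  define Q4 where "Q4 = Qf T t1 t2 t3"
  define S where "S = - (Q1 + Q2 + Q3 + Q4) / (3 * k)"
  define v1 where "v1 = (S + Q1 / k, t1, 1::complex)"
  define v2 where "v2 = (S + Q2 / k, t2, 1::complex)"
  define v3 where "v3 = (S + Q3 / k, t3, 1::complex)"
  define v4 where "v4 = (S + Q4 / k, t4, 1::complex)"
  have tri: "triT T (x1,y1,1) (x2,y2,1) (x3,y3,1) = k * (x1 + x2 + x3) + Qf T y1 y2 y3" for x1 y1 x2 y2 x3 y3
    using FX_tri[OF sT z] k_def by simp
  have e1: "triT T v1 v2 v3 = 0" unfolding v1_def v2_def v3_def tri Q4_def[symmetric] S_def using kk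
    by (simp add: field_simps)
  have e2: "triT T v1 v2 v4 = 0" unfolding v1_def v2_def v4_def tri S_def using kk
    by (simp add: field_simps Q3_def)
  have e3: "triT T v1 v3 v4 = 0" unfolding v1_def v3_def v4_def tri S_def using kk
    by (simp add: field_simps Q2_def)
  have e4: "triT T v2 v3 v4 = 0" unfolding v2_def v3_def v4_def tri S_def using kk
    by (simp add: field_simps Q1_def)
  have d1: "k * det3 v1 v2 v3 = - (t1 - t2) * (t2 - t3) * (t3 - t1) * (T 1 1 1 * t4 + T 1 1 2)"
    unfolding v1_def v2_def v3_def det_shift[OF kk] Q1_def Q2_def Q3_def by (rule D123)
  have d2: "k * det3 v1 v2 v4 = - (t1 - t2) * (t2 - t4) * (t4 - t1) * (T 1 1 1 * t3 + T 1 1 2)"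
    unfolding v1_def v2_def v4_def det_shift[OF kk] Q1_def Q2_def Q4_def by (rule D124)
  have d3: "k * det3 v1 v3 v4 = - (t1 - t3) * (t3 - t4) * (t4 - t1) * (T 1 1 1 * t2 + T 1 1 2)"
    unfolding v1_def v3_def v4_def det_shift[OF kk] Q1_def Q3_def Q4_def by (rule D134)
  have d4: "k * det3 v2 v3 v4 = - (t2 - t3) * (t3 - t4) * (t4 - t2) * (T 1 1 1 * t1 + T 1 1 2)"
    unfolding v2_def v3_def v4_def det_shift[OF kk] Q2_def Q3_def Q4_def by (rule D234)
  have td: "t1 - t2 \<noteq> 0" "t2 - t3 \<noteq> 0" "t3 - t1 \<noteq> 0" "t2 - t4 \<noteq> 0" "t4 - t1 \<noteq> 0" "t1 - t3 \<noteq> 0" "t3 - t4 \<noteq> 0" "t4 - t2 \<noteq> 0"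
    by (simp_all add: t1_def t2_def t3_def t4_def)
  have "det3 v1 v2 v3 \<noteq> 0" "det3 v1 v2 v4 \<noteq> 0" "det3 v1 v3 v4 \<noteq> 0" "det3 v2 v3 v4 \<noteq> 0"
    using d1 d2 d3 d4 td n1 n2 n3 n4 by auto
  then show ?thesis unfolding GoodT_def using e1 e2 e3 e4 by blast
next
  case True
  define k where "k = T 0 2 2"
  have kk: "k \<noteq> 0" using kz k_def by simp
  define \<mu> where "\<mu> = - T 1 2 2 / k"
  define \<sigma> where "\<sigma> = - (T 1 2 2 + T 2 2 2) / k"
  define d :: complex where "d = (if \<mu> = 1 \<or> \<mu> = -1 then 2 else 1)"
  have dm: "d \<noteq> \<mu> \<and> d \<noteq> - \<mu>"
  proof (cases "\<mu> = 1 \<or> \<mu> = -1")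
    case True
    then have "d = 2" by (simp add: d_def)
    with True show ?thesis by auto
  next
    case False
    then have "d = 1" by (simp add: d_def)
    with False show ?thesis by (auto simp: minus_equation_iff[of \<mu>])
  qed
  have dd: "d \<noteq> 0" "\<mu> + d \<noteq> 0" "\<mu> - d \<noteq> 0" "- \<mu> \<noteq> d" "\<mu> \<noteq> d"
    using dm by (auto simp: d_def dest: minus_unique)
  have zl: "triT T (\<mu>,1,0) (x0,x1,x2) (y0,y1,y2) = 0" for x0 x1 x2 y0 y1 y2
    using z True kk by (simp add: triS[OF sT] \<mu>_def k_def field_simps)
  have e4: "triT T (\<sigma>/3 + d, 0, 1) (\<sigma>/3, 1, 1) (\<sigma>/3 - d, 0, 1) = 0"
    using FX_tri[OF sT z] True kk by (simp add: Qf_def \<sigma>_def k_def field_simps)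
  show ?thesis unfolding GoodT_def
    apply (rule exI[of _ "(\<mu>,1,0)"], rule exI[of _ "(\<sigma>/3 + d, 0, 1)"], rule exI[of _ "(\<sigma>/3, 1, 1)"], rule exI[of _ "(\<sigma>/3 - d, 0, 1)"])
    using zl e4 dd by (simp add: det3_def algebra_simps)
qed

lemma PRfull:
  assumes sT: "symT T" and z: "T 0 0 1 = 0" "T 0 1 1 = 0" "T 0 1 2 = 0"
  shows "GoodT T"
proof (cases "T 0 0 0 = 0 \<and> T 0 0 2 = 0 \<and> T 0 2 2 \<noteq> 0")
  case True
  then show ?thesis using FX[OF sT] z by blast
next
  case nf1: False
  show ?thesis
  proof (cases "T 1 1 1 = 0 \<and> T 1 1 2 = 0 \<and> T 1 2 2 \<noteq> 0")
    case True
    let ?T' = "pullT T (0,1,0) (1,0,0) (0,0,1)"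
    have "GoodT ?T'"
      by (rule FX[OF symT_pull[OF sT]]) (use True z in \<open>simp_all add: pullT_def mv_def triS[OF sT]\<close>)
    then show ?thesis by (rule GoodT_pull[rotated]) (simp add: det3_def)
  next
    case False
    then show ?thesis using PR[OF sT z nf1] by blast
  qed
qed

lemma kern:
  fixes n00 n01 n02 n11 n12 n22 :: complex
  assumes det: "det3 (n00, n01, n02) (n01, n11, n12) (n02, n12, n22) = 0"
    and nn: "\<not> (n00 = 0 \<and> n01 = 0 \<and> n02 = 0 \<and> n11 * n22 - n12 * n12 \<noteq> 0)"
  shows "\<exists>w0 w1 w2. (w1 \<noteq> 0 \<or> w2 \<noteq> 0) \<and> n00 * w0 + n01 * w1 + n02 * w2 = 0
          \<and> n01 * w0 + n11 * w1 + n12 * w2 = 0 \<and> n02 * w0 + n12 * w1 + n22 * w2 = 0"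
proof -
  have dexp: "n00 * (n11 * n22 - n12 * n12) - n01 * (n01 * n22 - n12 * n02) + n02 * (n01 * n12 - n11 * n02) = 0"
    using det by (simp add: det3_def)
  define dB where "dB = n11 * n22 - n12 * n12"
  show ?thesis
  proof (cases "dB = 0")
    case False
    show ?thesis
    proof (cases "n01 = 0 \<and> n02 = 0")
      case True
      then have "n00 * dB = 0" using dexp dB_def by simp
      then have "n00 = 0" using False by simp
      with True False nn dB_def show ?thesis by simp
    next
      case b: False
      define w1 where "w1 = - (n22 * n01 - n12 * n02)"
      define w2 where "w2 = - (n11 * n02 - n12 * n01)"
      have nz: "w1 \<noteq> 0 \<or> w2 \<noteq> 0"
      proof (rule ccontr)
        assume "\<not> (w1 \<noteq> 0 \<or> w2 \<noteq> 0)"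
        then have h: "n22 * n01 - n12 * n02 = 0" "n11 * n02 - n12 * n01 = 0" by (simp_all add: w1_def w2_def)
        have "dB * n01 = 0" "dB * n02 = 0" using h unfolding dB_def by algebra+
        with False b show False by simp
      qed
      show ?thesis
      proof (intro exI conjI)
        show "w1 \<noteq> 0 \<or> w2 \<noteq> 0" by (rule nz)
        show "n00 * dB + n01 * w1 + n02 * w2 = 0" using dexp unfolding w1_def w2_def dB_def by algebra
        show "n01 * dB + n11 * w1 + n12 * w2 = 0" unfolding w1_def w2_def dB_def by algebra
        show "n02 * dB + n12 * w1 + n22 * w2 = 0" unfolding w1_def w2_def dB_def by algebra
      qed
    qed
  next
    case True
    show ?thesis
    proof (cases "n22 \<noteq> 0 \<or> n12 \<noteq> 0")
      case c: True
      have "(n01 * n22 - n02 * n12)^2 = 0" using True dexp unfolding dB_def power2_eq_square by algebra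
      then have "n01 * n22 - n02 * n12 = 0" by simp
      then have r0: "n00 * 0 + n01 * n22 + n02 * - n12 = 0" by simp
      have r1: "n01 * 0 + n11 * n22 + n12 * - n12 = 0" using True unfolding dB_def by simp
      have r2: "n02 * 0 + n12 * n22 + n22 * - n12 = 0" by simp
      have nzc: "n22 \<noteq> 0 \<or> - n12 \<noteq> 0" using c by simp
      show ?thesis using r0 r1 r2 nzc by blast
    next
      case c: False
      then have z: "n22 = 0" "n12 = 0" by auto
      show ?thesis
      proof (cases "n11 = 0")
        case False
        have "(n01 * n12 - n02 * n11)^2 = 0" using True dexp unfolding dB_def power2_eq_square by algebra
        then have "n01 * n12 - n02 * n11 = 0" by simp
        then have "n02 = 0" using False z by simp
        then have r0: "n00 * 0 + n01 * n12 + n02 * - n11 = 0" "n01 * 0 + n11 * n12 + n12 * - n11 = 0"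
           "n02 * 0 + n12 * n12 + n22 * - n11 = 0" "n12 \<noteq> 0 \<or> - n11 \<noteq> 0" using z False by simp_all
        show ?thesis using r0 by blast
      next
        case n11: True
        show ?thesis
        proof (cases "n01 = 0 \<and> n02 = 0")
          case True
          then have r0: "n00 * 0 + n01 * 1 + n02 * 0 = 0" "n01 * 0 + n11 * 1 + n12 * 0 = 0"
           "n02 * 0 + n12 * 1 + n22 * 0 = 0" "(1::complex) \<noteq> 0 \<or> (0::complex) \<noteq> 0" using z n11 by simp_all
          show ?thesis using r0 by blast
        next
          case False
          then have r0: "n00 * 0 + n01 * n02 + n02 * - n01 = 0" "n01 * 0 + n11 * n02 + n12 * - n01 = 0"
           "n02 * 0 + n12 * n02 + n22 * - n01 = 0" "n02 \<noteq> 0 \<or> - n01 \<noteq> 0" using z n11 by (auto simp: algebra_simps)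
          show ?thesis using r0 by blast
        qed
      qed
    qed
  qed
qed

definition detN :: "(nat \<Rightarrow> nat \<Rightarrow> nat \<Rightarrow> complex) \<Rightarrow> complex" where
  "detN T = det3 (T 0 0 0, T 0 0 1, T 0 0 2) (T 0 1 0, T 0 1 1, T 0 1 2) (T 0 2 0, T 0 2 1, T 0 2 2)"

lemma HessPair:
  assumes sT: "symT T" and det: "detN T = 0"
    and nn: "\<not> (T 0 0 0 = 0 \<and> T 0 0 1 = 0 \<and> T 0 0 2 = 0 \<and> T 0 1 1 * T 0 2 2 - T 0 1 2 * T 0 1 2 \<noteq> 0)"
  shows "GoodT T"
proof -
  note ts = symT_eqs[OF sT]
  have "det3 (T 0 0 0, T 0 0 1, T 0 0 2) (T 0 0 1, T 0 1 1, T 0 1 2) (T 0 0 2, T 0 1 2, T 0 2 2) = 0"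
    using det by (simp add: detN_def ts ts[unfolded One_nat_def])
  from kern[OF this nn] obtain w0 w1 w2 where w: "w1 \<noteq> 0 \<or> w2 \<noteq> 0"
    "T 0 0 0 * w0 + T 0 0 1 * w1 + T 0 0 2 * w2 = 0"
    "T 0 0 1 * w0 + T 0 1 1 * w1 + T 0 1 2 * w2 = 0"
    "T 0 0 2 * w0 + T 0 1 2 * w1 + T 0 2 2 * w2 = 0" by blast
  have tw: "triT T (1,0,0) (w0,w1,w2) (x0,x1,x2) =
     x0 * (T 0 0 0 * w0 + T 0 0 1 * w1 + T 0 0 2 * w2) + x1 * (T 0 0 1 * w0 + T 0 1 1 * w1 + T 0 1 2 * w2)
     + x2 * (T 0 0 2 * w0 + T 0 1 2 * w1 + T 0 2 2 * w2)" for x0 x1 x2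
    by (simp add: triS[OF sT] algebra_simps)
  have tw0: "triT T (1,0,0) (w0,w1,w2) x = 0" for x using w by (cases x) (simp add: tw)
  show ?thesis
  proof (cases "w2 \<noteq> 0")
    case True
    let ?T' = "pullT T (1,0,0) (w0,w1,w2) (0,1,0)"
    have "GoodT ?T'"
    proof (rule PRfull[OF symT_pull[OF sT]])
      show "?T' 0 0 1 = 0" "?T' 0 1 1 = 0" "?T' 0 1 2 = 0"
        using tw0 triT_swap12[OF sT] triT_swap23[OF sT] by (simp_all add: pullT_def mv_def) metis+
    qed
    then show ?thesis by (rule GoodT_pull[rotated]) (use True in \<open>simp add: det3_def\<close>)
  next
    case False
    then have w1: "w1 \<noteq> 0" using w(1) by simp
    let ?T' = "pullT T (1,0,0) (w0,w1,w2) (0,0,1)"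
    have "GoodT ?T'"
    proof (rule PRfull[OF symT_pull[OF sT]])
      show "?T' 0 0 1 = 0" "?T' 0 1 1 = 0" "?T' 0 1 2 = 0"
        using tw0 triT_swap12[OF sT] triT_swap23[OF sT] by (simp_all add: pullT_def mv_def) metis+
    qed
    then show ?thesis by (rule GoodT_pull[rotated]) (use w1 in \<open>simp add: det3_def\<close>)
  qed
qed

lemma det3_transpose: "det3 (a0,a1,a2) (b0,b1,b2) (c0,c1,c2) = det3 (a0,b0,c0) (a1,b1,c1) (a2,b2,c2)"
  by (simp add: det3_def algebra_simps)

lemma vec_unit: "v = vlc (fst v) (1,0,0) (fst (snd v)) (0,1,0) (snd (snd v)) (0,0,1)"
  by (cases v) (simp add: vlc_def)

lemma cong_det:
  "det3 (triT T x m0 m0, triT T x m0 m1, triT T x m0 m2) (triT T x m1 m0, triT T x m1 m1, triT T x m1 m2)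
        (triT T x m2 m0, triT T x m2 m1, triT T x m2 m2)
   = (det3 m0 m1 m2)^2 * det3 (triT T x (1,0,0) (1,0,0), triT T x (1,0,0) (0,1,0), triT T x (1,0,0) (0,0,1))
        (triT T x (0,1,0) (1,0,0), triT T x (0,1,0) (0,1,0), triT T x (0,1,0) (0,0,1))
        (triT T x (0,0,1) (1,0,0), triT T x (0,0,1) (0,1,0), triT T x (0,0,1) (0,0,1))"
proof -
  define b where "b = (\<lambda>u w. triT T x u w)"
  define e0 where "e0 = ((1,0,0) :: cvec3)"
  define e1 where "e1 = ((0,1,0) :: cvec3)"
  define e2 where "e2 = ((0,0,1) :: cvec3)"
  define S0 where "S0 = (b e0 m0, b e0 m1, b e0 m2)"
  define S1 where "S1 = (b e1 m0, b e1 m1, b e1 m2)"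
  define S2 where "S2 = (b e2 m0, b e2 m1, b e2 m2)"
  have row: "(b u m0, b u m1, b u m2) = comb S0 S1 S2 u" for u
  proof -
    have "b u w = fst u * b e0 w + fst (snd u) * b e1 w + snd (snd u) * b e2 w" for w
      unfolding b_def e0_def e1_def e2_def by (subst vec_unit[of u]) (simp only: triT_lin2)
    then show ?thesis by (simp add: comb_def vlc_def S0_def S1_def S2_def)
  qed
  define W0 where "W0 = (b e0 e0, b e1 e0, b e2 e0)"
  define W1 where "W1 = (b e0 e1, b e1 e1, b e2 e1)"
  define W2 where "W2 = (b e0 e2, b e1 e2, b e2 e2)"
  have col: "(b e0 w, b e1 w, b e2 w) = comb W0 W1 W2 w" for w
  proof -
    have "b u w = fst w * b u e0 + fst (snd w) * b u e1 + snd (snd w) * b u e2" for u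
      unfolding b_def e0_def e1_def e2_def by (subst vec_unit[of w]) (simp only: triT_lin3)
    then show ?thesis by (simp add: comb_def vlc_def W0_def W1_def W2_def)
  qed
  have "det3 (b m0 m0, b m0 m1, b m0 m2) (b m1 m0, b m1 m1, b m1 m2) (b m2 m0, b m2 m1, b m2 m2)
      = det3 S0 S1 S2 * det3 m0 m1 m2" unfolding row det3_comb ..
  also have "det3 S0 S1 S2 = det3 (b e0 m0, b e1 m0, b e2 m0) (b e0 m1, b e1 m1, b e2 m1) (b e0 m2, b e1 m2, b e2 m2)"
    unfolding S0_def S1_def S2_def by (rule det3_transpose)
  also have "\<dots> = det3 W0 W1 W2 * det3 m0 m1 m2" unfolding col det3_comb ..
  also have "det3 W0 W1 W2 = det3 (b e0 e0, b e0 e1, b e0 e2) (b e1 e0, b e1 e1, b e1 e2) (b e2 e0, b e2 e1, b e2 e2)"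
    unfolding W0_def W1_def W2_def by (rule det3_transpose)
  finally show ?thesis unfolding b_def e0_def e1_def e2_def by (simp add: power2_eq_square mult_ac)
qed

definition hdet :: "(nat \<Rightarrow> nat \<Rightarrow> nat \<Rightarrow> complex) \<Rightarrow> cvec3 \<Rightarrow> complex" where
  "hdet T x = det3 (triT T x (1,0,0) (1,0,0), triT T x (1,0,0) (0,1,0), triT T x (1,0,0) (0,0,1))
        (triT T x (0,1,0) (1,0,0), triT T x (0,1,0) (0,1,0), triT T x (0,1,0) (0,0,1))
        (triT T x (0,0,1) (1,0,0), triT T x (0,0,1) (0,1,0), triT T x (0,0,1) (0,0,1))"

lemma detN_pull: "detN (pullT T m0 m1 m2) = (det3 m0 m1 m2)^2 * hdet T m0"
proof -
  have "detN (pullT T m0 m1 m2) = det3 (triT T m0 m0 m0, triT T m0 m0 m1, triT T m0 m0 m2) (triT T m0 m1 m0, triT T m0 m1 m1, triT T m0 m1 m2)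
        (triT T m0 m2 m0, triT T m0 m2 m1, triT T m0 m2 m2)"
    unfolding detN_def pullT_def mv_def by simp
  also have "\<dots> = (det3 m0 m1 m2)^2 * hdet T m0" unfolding hdet_def by (rule cong_det)
  finally show ?thesis .
qed
lemma Node:
  assumes sT: "symT T" and z: "T 0 0 0 = 0" "T 0 0 1 = 0" "T 0 0 2 = 0"
    and dq: "T 0 1 1 * T 0 2 2 - T 0 1 2 * T 0 1 2 \<noteq> 0"
  shows "GoodT T"
proof -
  define q where "q = (\<lambda>v1 v2. T 0 1 1 * v1 * v1 + 2 * T 0 1 2 * v1 * v2 + T 0 2 2 * v2 * v2)"
  obtain v1 v2 where qv: "q v1 v2 \<noteq> 0"
  proof (cases "T 0 1 1 \<noteq> 0")
    case True
    then show ?thesis using that[of 1 0] by (simp add: q_def)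
  next
    case False
    show ?thesis
    proof (cases "T 0 2 2 \<noteq> 0")
      case True
      then show ?thesis using that[of 0 1] by (simp add: q_def)
    next
      case False': False
      then have "T 0 1 2 \<noteq> 0" using False dq by auto
      then show ?thesis using that[of 1 1] False False' by (simp add: q_def)
    qed
  qed
  define dd where "dd = T 0 1 1 * T 0 2 2 - T 0 1 2 * T 0 1 2"
  define b1 where "b1 = T 0 1 1 * v1 + T 0 1 2 * v2"
  define b2 where "b2 = T 0 1 2 * v1 + T 0 2 2 * v2"
  define C11 where "C11 = v1 * T 1 1 1 + v2 * T 1 1 2"
  define C12 where "C12 = v1 * T 1 1 2 + v2 * T 1 2 2"
  define C22 where "C22 = v1 * T 1 2 2 + v2 * T 2 2 2"
  define g where "g = b1 * b1 * C22 - 2 * b1 * b2 * C12 + b2 * b2 * C11"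
  have hform: "hdet T (v0, v1, v2) = - (v0 * dd * q v1 v2 + g)" for v0
    unfolding hdet_def
    by (simp add: triS[OF sT] z z[unfolded One_nat_def] det3_def q_def dd_def g_def b1_def b2_def C11_def C12_def C22_def) algebra
  define v0 where "v0 = - g / (dd * q v1 v2)"
  have ddn: "dd \<noteq> 0" using dq dd_def by simp
  have h0: "hdet T (v0, v1, v2) = 0" unfolding hform v0_def using ddn qv by (simp add: field_simps)
  have tvv: "triT T (v0,v1,v2) (v0,v1,v2) (1,0,0) = q v1 v2"
    using z by (simp add: triS[OF sT] q_def algebra_simps)
  define m2 :: cvec3 where "m2 = (if v2 \<noteq> 0 then (0,1,0) else (0,0,1))"
  have v1n: "v2 = 0 \<Longrightarrow> v1 \<noteq> 0" using qv by (auto simp: q_def)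
  have dm: "det3 (v0,v1,v2) (1,0,0) m2 \<noteq> 0"
    using v1n by (auto simp: m2_def det3_def)
  let ?T' = "pullT T (v0,v1,v2) (1,0,0) m2"
  have "GoodT ?T'"
  proof (rule HessPair[OF symT_pull[OF sT]])
    show "detN ?T' = 0" unfolding detN_pull h0 by simp
    have "?T' 0 0 1 = q v1 v2" by (simp add: pullT_def mv_def tvv)
    then show "\<not> (?T' 0 0 0 = 0 \<and> ?T' 0 0 1 = 0 \<and> ?T' 0 0 2 = 0 \<and> ?T' 0 1 1 * ?T' 0 2 2 - ?T' 0 1 2 * ?T' 0 1 2 \<noteq> 0)"
      using qv by simp
  qed
  then show ?thesis using GoodT_pull dm by blast
qed

lemma det3_pencil:
  "det3 (a0 + s * b0, a1 + s * b1, a2 + s * b2) (c0 + s * d0, c1 + s * d1, c2 + s * d2) (e0 + s * f0, e1 + s * f1, e2 + s * f2)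
   = det3 (a0,a1,a2) (c0,c1,c2) (e0,e1,e2)
     + (det3 (b0,b1,b2) (c0,c1,c2) (e0,e1,e2) + det3 (a0,a1,a2) (d0,d1,d2) (e0,e1,e2) + det3 (a0,a1,a2) (c0,c1,c2) (f0,f1,f2)) * s
     + (det3 (a0,a1,a2) (d0,d1,d2) (f0,f1,f2) + det3 (b0,b1,b2) (c0,c1,c2) (f0,f1,f2) + det3 (b0,b1,b2) (d0,d1,d2) (e0,e1,e2)) * s^2
     + det3 (b0,b1,b2) (d0,d1,d2) (f0,f1,f2) * s^3"
  unfolding det3_def by (simp add: power2_eq_square power3_eq_cube) algebra

lemma hdet_line: "hdet T (1, s, 0) = det3 (triT T (1,0,0) (1,0,0) (1,0,0) + s * triT T (0,1,0) (1,0,0) (1,0,0),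
      triT T (1,0,0) (1,0,0) (0,1,0) + s * triT T (0,1,0) (1,0,0) (0,1,0), triT T (1,0,0) (1,0,0) (0,0,1) + s * triT T (0,1,0) (1,0,0) (0,0,1))
     (triT T (1,0,0) (0,1,0) (1,0,0) + s * triT T (0,1,0) (0,1,0) (1,0,0),
      triT T (1,0,0) (0,1,0) (0,1,0) + s * triT T (0,1,0) (0,1,0) (0,1,0), triT T (1,0,0) (0,1,0) (0,0,1) + s * triT T (0,1,0) (0,1,0) (0,0,1))
     (triT T (1,0,0) (0,0,1) (1,0,0) + s * triT T (0,1,0) (0,0,1) (1,0,0),
      triT T (1,0,0) (0,0,1) (0,1,0) + s * triT T (0,1,0) (0,0,1) (0,1,0), triT T (1,0,0) (0,0,1) (0,0,1) + s * triT T (0,1,0) (0,0,1) (0,0,1))"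
proof -
  have v: "(1, s, 0) = vlc 1 (1,0,0) s (0,1,0) 0 (0,0,1)" by (simp add: vlc_def)
  have "triT T (1, s, 0) u w = triT T (1,0,0) u w + s * triT T (0,1,0) u w" for u w
    unfolding v triT_lin1 by simp
  then show ?thesis unfolding hdet_def by presburger
qed

lemma StepR:
  assumes sT: "symT T"
  shows "\<exists>m0 m1 m2. det3 m0 m1 m2 \<noteq> 0 \<and> detN (pullT T m0 m1 m2) = 0"
proof (cases "hdet T (1,0,0) = 0")
  case True
  then show ?thesis by (intro exI[of _ "(1,0,0)"] exI[of _ "(0,1,0)"] exI[of _ "(0,0,1)"]) (simp add: detN_pull det3_def)
next
  case False
  show ?thesis
  proof (cases "hdet T (0,1,0) = 0")
    case True
    then show ?thesis by (intro exI[of _ "(0,1,0)"] exI[of _ "(1,0,0)"] exI[of _ "(0,0,1)"]) (simp add: detN_pull det3_def)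
  next
    case False2: False
    define av where "av = (\<lambda>i j. triT T (1,0,0) (unitv i) (unitv j))"
    define bv where "bv = (\<lambda>i j. triT T (0,1,0) (unitv i) (unitv j))"
    define c1 where "c1 = det3 (bv 0 0, bv 0 1, bv 0 2) (av 1 0, av 1 1, av 1 2) (av 2 0, av 2 1, av 2 2)
        + det3 (av 0 0, av 0 1, av 0 2) (bv 1 0, bv 1 1, bv 1 2) (av 2 0, av 2 1, av 2 2)
        + det3 (av 0 0, av 0 1, av 0 2) (av 1 0, av 1 1, av 1 2) (bv 2 0, bv 2 1, bv 2 2)"
    define c2 where "c2 = det3 (av 0 0, av 0 1, av 0 2) (bv 1 0, bv 1 1, bv 1 2) (bv 2 0, bv 2 1, bv 2 2)
        + det3 (bv 0 0, bv 0 1, bv 0 2) (av 1 0, av 1 1, av 1 2) (bv 2 0, bv 2 1, bv 2 2)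
        + det3 (bv 0 0, bv 0 1, bv 0 2) (bv 1 0, bv 1 1, bv 1 2) (av 2 0, av 2 1, av 2 2)"
    have u: "unitv 0 = (1,0,0)" "unitv 1 = (0,1,0)" "unitv 2 = (0,0,1)" by (simp_all add: unitv_def)
    have e: "hdet T (1, s, 0) = hdet T (1,0,0) + c1 * s + c2 * s^2 + hdet T (0,1,0) * s^3" for s
    proof -
      have "hdet T (1, s, 0) = det3 (av 0 0 + s * bv 0 0, av 0 1 + s * bv 0 1, av 0 2 + s * bv 0 2)
          (av 1 0 + s * bv 1 0, av 1 1 + s * bv 1 1, av 1 2 + s * bv 1 2)
          (av 2 0 + s * bv 2 0, av 2 1 + s * bv 2 1, av 2 2 + s * bv 2 2)"
        unfolding hdet_line av_def bv_def u ..
      also have "\<dots> = hdet T (1,0,0) + c1 * s + c2 * s^2 + hdet T (0,1,0) * s^3"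
        unfolding det3_pencil c1_def c2_def hdet_def av_def bv_def u ..
      finally show ?thesis .
    qed
    obtain s where s: "hdet T (1,0,0) + c1 * s + c2 * s^2 + hdet T (0,1,0) * s^3 = 0"
      using cubic_root[OF False2] by blast
    show ?thesis
      by (intro exI[of _ "(1,s,0)"] exI[of _ "(0,1,0)"] exI[of _ "(0,0,1)"]) (simp add: detN_pull det3_def e[of s] s)
  qed
qed

lemma exist_good:
  assumes sT: "symT T"
  shows "GoodT T"
proof -
  obtain m0 m1 m2 where m: "det3 m0 m1 m2 \<noteq> 0" "detN (pullT T m0 m1 m2) = 0" using StepR[OF sT] by blast
  define T1 where "T1 = pullT T m0 m1 m2"
  have s1: "symT T1" unfolding T1_def by (rule symT_pull[OF sT])
  have "GoodT T1"
  proof (cases "T1 0 0 0 = 0 \<and> T1 0 0 1 = 0 \<and> T1 0 0 2 = 0 \<and> T1 0 1 1 * T1 0 2 2 - T1 0 1 2 * T1 0 1 2 \<noteq> 0")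
    case True
    then show ?thesis using Node[OF s1] by blast
  next
    case False
    then show ?thesis using HessPair[OF s1] m(2) T1_def by blast
  qed
  then show ?thesis using GoodT_pull m(1) T1_def by blast
qed

lemma GoodT_norm:
  assumes "GoodT T"
  shows "\<exists>L0 L1 L2. det3 L0 L1 L2 \<noteq> 0 \<and> triT T L0 L1 L2 = 0 \<and> triT T L0 L1 (vlc 1 L0 1 L1 1 L2) = 0
     \<and> triT T L0 L2 (vlc 1 L0 1 L1 1 L2) = 0 \<and> triT T L1 L2 (vlc 1 L0 1 L1 1 L2) = 0"
proof -
  obtain l1 l2 l3 l4 where L: "det3 l1 l2 l3 \<noteq> 0" "det3 l1 l2 l4 \<noteq> 0" "det3 l1 l3 l4 \<noteq> 0" "det3 l2 l3 l4 \<noteq> 0"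
     "triT T l1 l2 l3 = 0" "triT T l1 l2 l4 = 0" "triT T l1 l3 l4 = 0" "triT T l2 l3 l4 = 0"
    using assms unfolding GoodT_def by blast
  define D where "D = det3 l1 l2 l3"
  define a1 where "a1 = det3 l4 l2 l3 / D"
  define a2 where "a2 = det3 l1 l4 l3 / D"
  define a3 where "a3 = det3 l1 l2 l4 / D"
  have DD: "D \<noteq> 0" using L(1) D_def by simp
  have n1: "det3 l4 l2 l3 \<noteq> 0" using L(4) by (simp add: det3_def algebra_simps)
  have n2: "det3 l1 l4 l3 \<noteq> 0" using L(3) by (simp add: det3_def algebra_simps)
  have a: "a1 \<noteq> 0" "a2 \<noteq> 0" "a3 \<noteq> 0" using n1 n2 L(2) DD by (simp_all add: a1_def a2_def a3_def)
  have cr: "D * fst l4 = det3 l4 l2 l3 * fst l1 + det3 l1 l4 l3 * fst l2 + det3 l1 l2 l4 * fst l3"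
     "D * fst (snd l4) = det3 l4 l2 l3 * fst (snd l1) + det3 l1 l4 l3 * fst (snd l2) + det3 l1 l2 l4 * fst (snd l3)"
     "D * snd (snd l4) = det3 l4 l2 l3 * snd (snd l1) + det3 l1 l4 l3 * snd (snd l2) + det3 l1 l2 l4 * snd (snd l3)"
    unfolding D_def det3_def by algebra+
  define L0 where "L0 = vlc a1 l1 0 l1 0 l1"
  define L1 where "L1 = vlc a2 l2 0 l2 0 l2"
  define L2 where "L2 = vlc a3 l3 0 l3 0 l3"
  have l4: "vlc 1 L0 1 L1 1 L2 = l4"
  proof -
    have "vlc 1 L0 1 L1 1 L2 = vlc a1 l1 a2 l2 a3 l3" by (simp add: L0_def L1_def L2_def vlc_def)
    also have "\<dots> = l4" using cr DD
      by (cases l4) (simp add: vlc_def a1_def a2_def a3_def field_simps)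
    finally show ?thesis .
  qed
  have "det3 L0 L1 L2 = a1 * a2 * a3 * D" by (simp add: L0_def L1_def L2_def D_def det3_def vlc_def algebra_simps)
  then have d: "det3 L0 L1 L2 \<noteq> 0" using a DD by simp
  show ?thesis
    apply (rule exI[of _ L0], rule exI[of _ L1], rule exI[of _ L2])
    unfolding l4 using d L by (simp add: L0_def L1_def L2_def triT_lin1 triT_lin2 triT_lin3)
qed


theorem theorem4p5:
  fixes F :: cpoly3
  assumes "is_form3 3 F"
  shows "\<exists>l. star_forms4 l \<and> ideal_of_points (star_points4 l) \<subseteq> perp F"
proof -
  have "GoodT (Tc F)" by (rule exist_good[OF symT_Tc])
  then obtain L0 L1 L2 where L: "det3 L0 L1 L2 \<noteq> 0" "triT (Tc F) L0 L1 L2 = 0"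
     "triT (Tc F) L0 L1 (vlc 1 L0 1 L1 1 L2) = 0" "triT (Tc F) L0 L2 (vlc 1 L0 1 L1 1 L2) = 0"
     "triT (Tc F) L1 L2 (vlc 1 L0 1 L1 1 L2) = 0"
    using GoodT_norm by blast
  show ?thesis by (rule GL_norm[OF assms L])
qed

end
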